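(* Let $n\ge1$, let $z_1,\dots,z_n\in\mathbb{C}$ be pairwise distinct, let $k_1,\dots,k_n\ge 0$ be integers, let $\beta_1,\dots,\beta_n\in\mathbb{C}\setminus\{0\}$ and $\alpha_i^{(j)}\in\mathbb{C}\setminus\{0\}$ ($j=1,\dots,n$, $i=1,\dots,k_j$), and set $m=\sum_{j=1}^n(k_j+1)$. Let $Z=J_{1,k_1}\oplus\cdots\oplus J_{n,k_n}\in\mathbb{C}^{m\times m}$, where $J_{j,k_j}\in\mathbb{C}^{(k_j+1)\times(k_j+1)}$ is upper bidiagonal with diagonal entries $z_j$ and superdiagonal entries, from top to bottom, $\alpha_{k_j}^{(j)},\dots,\alpha_1^{(j)}$, and let $w=\begin{bmatrix}\beta_1 e_{k_1+1}^\top&\cdots&\beta_n e_{k_n+1}^\top\end{bmatrix}^\top$ with $e_{k_j+1}=(0,\dots,0,1)^\top\in\mathbb{R}^{k_j+1}$. Define on polynomials the inner product $$\langle p,q\rangle_S=\sum_{j=1}^n|\beta_j|^2\sum_{r=0}^{k_j}\left|\frac{\prod_{i=1}^r\alpha_i^{(j)}}{r!}\right|^2\overline{q^{(r)}(z_j)}\,p^{(r)}(z_j).$$ Let $k<m$ and let $Q_k=[q_1,\dots,q_k]\in\mathbb{C}^{m\times k}$ be a nested orthonormal basis for $\mathcal{K}_k(Z,w)$, with Hessenberg matrix $H_k\in\mathbb{C}^{k\times k}$, scalar $h_{k+1,k}>0$ and vector $q_{k+1}\in\mathbb{C}^m$ with $q_{k+1}^HQ_k=0$ such that $$ZQ_k=Q_kH_k+h_{k+1,k}\,q_{k+1}e_k^\top.$$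 Then the polynomials $p_0,\dots,p_k$ defined by $p_{\ell}(Z)w=q_{\ell+1}$, $p_\ell\in\mathcal{P}_\ell$, form a sequence of Sobolev orthonormal polynomials for $\langle\cdot,\cdot\rangle_S$, and they satisfy the recurrence relation $$z\begin{bmatrix}p_0(z)&\cdots&p_{k-1}(z)\end{bmatrix}=\begin{bmatrix}p_0(z)&\cdots&p_{k-1}(z)\end{bmatrix}H_k+h_{k+1,k}\,p_k(z)\,e_k^\top.$$ Conversely, if $p_0,\dots,p_k$ is a sequence of Sobolev orthonormal polynomials for $\langle\cdot,\cdot\rangle_S$ satisfying this recurrence with a Hessenberg matrix $H_k$ and $h_{k+1,k}>0$, then $q_{\ell+1}:=p_\ell(Z)w$ ($\ell=0,\dots,k$) give a nested orthonormal basis $Q_k=[q_1,\dots,q_k]$ of $\mathcal{K}_k(Z,w)$ with $ZQ_k=Q_kH_k+h_{k+1,k}q_{k+1}e_k^\top$.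
   Context: $\mathcal{P}_\ell$ is the space of complex polynomials of degree at most $\ell$ ($\mathcal{P}_{-1}=\{0\}$). $\mathcal{K}_k(A,v)=\mathrm{span}\{v,Av,\dots,A^{k-1}v\}$. A matrix $Q_k=[q_1,\dots,q_k]$ is a nested orthonormal basis for $\mathcal{K}_k(A,v)$ if $Q_k^HQ_k=I$ and $\mathrm{span}\{q_1,\dots,q_i\}=\mathcal{K}_i(A,v)$ for $i=1,\dots,k$. A Hessenberg matrix $H$ has $h_{i,j}=0$ whenever $i-1>j$. A sequence $\{p_\ell\}$ is a sequence of Sobolev orthonormal polynomials for $\langle\cdot,\cdot\rangle_S$ if $p_\ell\in\mathcal{P}_\ell\setminus\mathcal{P}_{\ell-1}$ and $\langle p_k,p_\ell\rangle_S=\delta_{k\ell}$. $e_k$ is the $k$th standard unit vector of $\mathbb{R}^k$. *)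

theory Defs
  imports "HOL-Computational_Algebra.Polynomial" "Jordan_Normal_Form.Schur_Decomposition"
begin

definition poly_mat :: "complex poly \<Rightarrow> complex mat \<Rightarrow> complex mat" where
  "poly_mat p A = foldr (\<lambda>c B. c \<cdot>\<^sub>m 1\<^sub>m (dim_row A) + A * B) (coeffs p) (0\<^sub>m (dim_row A) (dim_row A))"

definition Pspace :: "int \<Rightarrow> complex poly set" where
  "Pspace d = {p. p = 0 \<or> int (degree p) \<le> d}"

definition span_list :: "nat \<Rightarrow> complex vec list \<Rightarrow> complex vec set" where
  "span_list m vs = {mat_of_cols m vs *\<^sub>v c | c. c \<in> carrier_vec (length vs)}"

definition krylov :: "complex mat \<Rightarrow> complex vec \<Rightarrow> nat \<Rightarrow> complex vec set" where
  "krylov A v i = span_list (dim_vec v) (map (\<lambda>t. (A ^\<^sub>m t) *\<^sub>v v) [0..<i])"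

definition nested_onb :: "complex mat \<Rightarrow> complex mat \<Rightarrow> complex vec \<Rightarrow> nat \<Rightarrow> bool" where
  "nested_onb Q A v k \<longleftrightarrow> Q \<in> carrier_mat (dim_vec v) k \<and> mat_adjoint Q * Q = 1\<^sub>m k \<and>
     (\<forall>i\<in>{1..k}. span_list (dim_vec v) (map (col Q) [0..<i]) = krylov A v i)"

(* Hessenberg: h_{i,j} = 0 whenever i - 1 > j (0-based indices here, same condition) *)
definition hessenberg :: "complex mat \<Rightarrow> bool" where
  "hessenberg H \<longleftrightarrow> (\<forall>i<dim_row H. \<forall>j<dim_col H. i > j + 1 \<longrightarrow> H $$ (i, j) = 0)"

definition sob_m :: "nat \<Rightarrow> (nat \<Rightarrow> nat) \<Rightarrow> nat" where
  "sob_m n kk = (\<Sum>j=1..n. kk j + 1)"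

(* J_{j,k_j}: upper bidiagonal (k_j+1)x(k_j+1), diagonal z_j, superdiagonal from top to bottom
   alpha_{k_j}^{(j)}, ..., alpha_1^{(j)} (row r, 0-based, carries alpha_{k_j - r}^{(j)}) *)
definition sob_J :: "(nat \<Rightarrow> complex) \<Rightarrow> (nat \<Rightarrow> nat) \<Rightarrow> (nat \<Rightarrow> nat \<Rightarrow> complex) \<Rightarrow> nat \<Rightarrow> complex mat" where
  "sob_J z kk \<alpha> j = mat (kk j + 1) (kk j + 1)
     (\<lambda>(r, c). if r = c then z j else if c = r + 1 then \<alpha> j (kk j - r) else 0)"

definition sob_Z :: "nat \<Rightarrow> (nat \<Rightarrow> complex) \<Rightarrow> (nat \<Rightarrow> nat) \<Rightarrow> (nat \<Rightarrow> nat \<Rightarrow> complex) \<Rightarrow> complex mat" where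
  "sob_Z n z kk \<alpha> = diag_block_mat (map (sob_J z kk \<alpha>) [1..<n+1])"

definition sob_w :: "nat \<Rightarrow> (nat \<Rightarrow> nat) \<Rightarrow> (nat \<Rightarrow> complex) \<Rightarrow> complex vec" where
  "sob_w n kk \<beta> = vec_of_list (concat (map (\<lambda>j. replicate (kk j) 0 @ [\<beta> j]) [1..<n+1]))"

definition sob_ip :: "nat \<Rightarrow> (nat \<Rightarrow> complex) \<Rightarrow> (nat \<Rightarrow> nat) \<Rightarrow> (nat \<Rightarrow> complex) \<Rightarrow> (nat \<Rightarrow> nat \<Rightarrow> complex)
     \<Rightarrow> complex poly \<Rightarrow> complex poly \<Rightarrow> complex" where
  "sob_ip n z kk \<beta> \<alpha> p q = (\<Sum>j=1..n. complex_of_real ((cmod (\<beta> j))\<^sup>2) *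
     (\<Sum>r=0..kk j. complex_of_real ((cmod ((\<Prod>i=1..r. \<alpha> j i) / of_nat (fact r)))\<^sup>2) *
        cnj (poly ((pderiv ^^ r) q) (z j)) * poly ((pderiv ^^ r) p) (z j)))"

definition sobolev_orthonormal :: "(complex poly \<Rightarrow> complex poly \<Rightarrow> complex) \<Rightarrow> (nat \<Rightarrow> complex poly) \<Rightarrow> nat \<Rightarrow> bool" where
  "sobolev_orthonormal ip p k \<longleftrightarrow>
     (\<forall>l\<le>k. p l \<in> Pspace (int l) - Pspace (int l - 1)) \<and>
     (\<forall>a\<le>k. \<forall>b\<le>k. ip (p a) (p b) = (if a = b then 1 else 0))"

definition poly_recurrence :: "(nat \<Rightarrow> complex poly) \<Rightarrow> complex mat \<Rightarrow> real \<Rightarrow> nat \<Rightarrow> bool" where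
  "poly_recurrence p H h k \<longleftrightarrow> (\<forall>x::complex. \<forall>c<k.
     x * poly (p c) x = (\<Sum>i<k. poly (p i) x * H $$ (i, c)) + (if c = k - 1 then complex_of_real h * poly (p k) x else 0))"

definition arnoldi_rel :: "complex mat \<Rightarrow> complex mat \<Rightarrow> complex mat \<Rightarrow> real \<Rightarrow> complex vec \<Rightarrow> nat \<Rightarrow> bool" where
  "arnoldi_rel Z Q H h q k \<longleftrightarrow>
     Z * Q = Q * H + complex_of_real h \<cdot>\<^sub>m (mat_of_cols (dim_vec q) [q] * mat_of_rows k [unit_vec k (k - 1)])"

end

theory Submission
  imports Defs "HOL-Computational_Algebra.Polynomial_Factorial" "HOL-Computational_Algebra.Field_as_Ring"
begin



definition cf :: "(nat \<Rightarrow> nat \<Rightarrow> complex) \<Rightarrow> nat \<Rightarrow> nat \<Rightarrow> complex" where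
  "cf \<alpha> j r = (\<Prod>i=1..r. \<alpha> j i) / of_nat (fact r)"

definition bpsi :: "(nat \<Rightarrow> complex) \<Rightarrow> (nat \<Rightarrow> nat) \<Rightarrow> (nat \<Rightarrow> complex) \<Rightarrow> (nat \<Rightarrow> nat \<Rightarrow> complex)
   \<Rightarrow> nat \<Rightarrow> complex poly \<Rightarrow> complex vec" where
  "bpsi z kk \<beta> \<alpha> j p = vec (kk j + 1) (\<lambda>s. \<beta> j * cf \<alpha> j (kk j - s) * poly ((pderiv^^(kk j - s)) p) (z j))"

primrec psi :: "(nat \<Rightarrow> complex) \<Rightarrow> (nat \<Rightarrow> nat) \<Rightarrow> (nat \<Rightarrow> complex) \<Rightarrow> (nat \<Rightarrow> nat \<Rightarrow> complex)
   \<Rightarrow> nat list \<Rightarrow> complex poly \<Rightarrow> complex vec" where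
  "psi z kk \<beta> \<alpha> [] p = vec 0 (\<lambda>_. 0)"
| "psi z kk \<beta> \<alpha> (j#js) p = bpsi z kk \<beta> \<alpha> j p @\<^sub>v psi z kk \<beta> \<alpha> js p"

definition dl :: "(nat \<Rightarrow> nat) \<Rightarrow> nat list \<Rightarrow> nat" where
  "dl kk js = sum_list (map (\<lambda>j. kk j + 1) js)"

lemma dl_simps[simp]: "dl kk [] = 0" "dl kk (j#js) = kk j + 1 + dl kk js"
  by (auto simp: dl_def)

lemma bpsi_carrier[simp]: "bpsi z kk \<beta> \<alpha> j p \<in> carrier_vec (kk j + 1)" "dim_vec (bpsi z kk \<beta> \<alpha> j p) = kk j + 1"
  by (auto simp: bpsi_def)

lemma psi_dim[simp]: "dim_vec (psi z kk \<beta> \<alpha> js p) = dl kk js"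
  by (induct js, auto)

lemma psi_carrier[simp]: "psi z kk \<beta> \<alpha> js p \<in> carrier_vec (dl kk js)"
  by (rule carrier_vecI) simp

lemma hp_add: "(pderiv^^r) (p + q) = (pderiv^^r) p + (pderiv^^r) (q :: complex poly)"
  by (induct r, auto simp: pderiv_add)

lemma hp_smult: "(pderiv^^r) (smult c p) = smult c ((pderiv^^r) (p :: complex poly))"
  by (induct r, auto simp: pderiv_smult)

lemma hp_zero[simp]: "(pderiv^^r) (0 :: complex poly) = 0"
  by (induct r, auto)

lemma hp_const: "(pderiv^^Suc r) [:c::complex:] = 0"
  by (induct r, auto simp: pderiv_pCons)

lemma hp_x: "(pderiv ^^ Suc r) (pCons 0 p) = pCons 0 ((pderiv^^Suc r) p) + smult (of_nat (Suc r)) ((pderiv^^r) (p::complex poly))"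
proof (induct r)
  case 0 then show ?case by (simp add: pderiv_pCons)
next
  case (Suc r)
  have "(pderiv ^^ Suc (Suc r)) (pCons 0 p) = pderiv ((pderiv ^^ Suc r) (pCons 0 p))" by simp
  also have "\<dots> = pderiv (pCons 0 ((pderiv^^Suc r) p) + smult (of_nat (Suc r)) ((pderiv^^r) p))" using Suc by simp
  also have "\<dots> = (pderiv^^Suc r) p + pCons 0 ((pderiv^^Suc (Suc r)) p) + smult (of_nat (Suc r)) ((pderiv^^Suc r) p)"
    by (simp add: pderiv_add pderiv_smult pderiv_pCons)
  also have "\<dots> = pCons 0 ((pderiv^^Suc (Suc r)) p) + smult (of_nat (Suc (Suc r))) ((pderiv^^Suc r) p)"
  proof -
    have "smult (of_nat (Suc (Suc r))) ((pderiv^^Suc r) p) = (pderiv^^Suc r) p + smult (of_nat (Suc r)) ((pderiv^^Suc r) p)"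
      by (simp only: of_nat_Suc[of "Suc r"] smult_add_left smult_1_left)
    thus ?thesis by (simp only: add_ac)
  qed
  finally show ?case .
qed

lemma poly_hp_x: "poly ((pderiv ^^ r) (pCons 0 (p::complex poly))) x = x * poly ((pderiv^^r) p) x + (if r = 0 then 0 else of_nat r * poly ((pderiv^^(r-1)) p) x)"
proof (cases r)
  case (Suc r')
  show ?thesis unfolding Suc by (simp only: hp_x) simp
qed simp

lemma cf_Suc: "cf \<alpha> j (Suc r) * of_nat (Suc r) = \<alpha> j (Suc r) * cf \<alpha> j r"
proof -
  have f: "(fact r :: complex) \<noteq> 0" by simp
  have "cf \<alpha> j (Suc r) = ((\<Prod>i=1..r. \<alpha> j i) * \<alpha> j (Suc r)) / (of_nat (Suc r) * fact r)"
    unfolding cf_def of_nat_fact by (subst fact_Suc) (simp add: prod.cl_ivl_Suc del: of_nat_Suc)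
  moreover have fs: "(fact r::complex) + of_nat r * fact r = of_nat (Suc r) * fact r"
    by (metis add.commute mult_1_left of_nat_Suc distrib_right)
  moreover have S: "(of_nat (Suc r)::complex) \<noteq> 0" by (metis of_nat_eq_0_iff nat.simps(3))
  ultimately show ?thesis unfolding cf_def using f by (simp add: field_simps del: of_nat_Suc)
qed

lemma cf_0[simp]: "cf \<alpha> j 0 = 1" by (simp add: cf_def)

lemma sum_two: fixes v :: "nat \<Rightarrow> complex" assumes "s < N"
  shows "(\<Sum>t\<in>{0..<N}. (if s = t then a else if t = s + 1 then b else 0) * v t) = a * v s + (if s + 1 < N then b * v (s+1) else 0)"
proof -
  have "(\<Sum>t\<in>{0..<N}. (if s = t then a else if t = s + 1 then b else 0) * v t)
     = (\<Sum>t\<in>{0..<N}. (if s = t then a * v s else 0) + (if s + 1 = t then b * v (s+1) else 0))"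
    by (rule sum.cong, auto)
  also have "\<dots> = a * v s + (if s + 1 < N then b * v (s+1) else 0)"
    using assms by (simp add: sum.distrib)
  finally show ?thesis .
qed

lemma J_carrier[simp]: "sob_J z kk \<alpha> j \<in> carrier_mat (kk j + 1) (kk j + 1)"
  by (simp add: sob_J_def)

lemma J_bpsi: "sob_J z kk \<alpha> j *\<^sub>v bpsi z kk \<beta> \<alpha> j p = bpsi z kk \<beta> \<alpha> j (pCons 0 p)"
proof (rule eq_vecI)
  fix s assume "s < dim_vec (bpsi z kk \<beta> \<alpha> j (pCons 0 p))"
  hence s: "s < kk j + 1" by simp
  let ?v = "\<lambda>t. bpsi z kk \<beta> \<alpha> j p $ t"
  have "(sob_J z kk \<alpha> j *\<^sub>v bpsi z kk \<beta> \<alpha> j p) $ s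
     = (\<Sum>t\<in>{0..<kk j + 1}. (if s = t then z j else if t = s + 1 then \<alpha> j (kk j - s) else 0) * ?v t)"
    using s by (simp add: sob_J_def scalar_prod_def)
  also have "\<dots> = z j * ?v s + (if s + 1 < kk j + 1 then \<alpha> j (kk j - s) * ?v (s+1) else 0)"
    by (rule sum_two[OF s])
  also have "\<dots> = bpsi z kk \<beta> \<alpha> j (pCons 0 p) $ s"
  proof (cases "s + 1 < kk j + 1")
    case True
    then obtain r where r: "kk j - s = Suc r" "kk j - (s+1) = r"
      by (metis Suc_diff_Suc Suc_eq_plus1 diff_Suc_Suc less_Suc_eq_le Suc_le_lessD)
    have "z j * ?v s + \<alpha> j (kk j - s) * ?v (s+1)
      = \<beta> j * (z j * cf \<alpha> j (Suc r) * poly ((pderiv^^Suc r) p) (z j) + (\<alpha> j (Suc r) * cf \<alpha> j r) * poly ((pderiv^^r) p) (z j))"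
      using True s r by (simp add: bpsi_def algebra_simps)
    also have "\<dots> = \<beta> j * cf \<alpha> j (Suc r) * (z j * poly ((pderiv^^Suc r) p) (z j) + of_nat (Suc r) * poly ((pderiv^^r) p) (z j))"
      unfolding cf_Suc[symmetric] by (simp add: algebra_simps)
    also have "\<dots> = bpsi z kk \<beta> \<alpha> j (pCons 0 p) $ s"
      using s r by (simp add: bpsi_def poly_hp_x del: of_nat_Suc)
    finally show ?thesis using True by simp
  next
    case False
    hence "s = kk j" using s by simp
    thus ?thesis by (simp add: bpsi_def)
  qed
  finally show "(sob_J z kk \<alpha> j *\<^sub>v bpsi z kk \<beta> \<alpha> j p) $ s = bpsi z kk \<beta> \<alpha> j (pCons 0 p) $ s" .
qed (simp add: sob_J_def)

definition ZL where "ZL z kk \<alpha> js = diag_block_mat (map (sob_J z kk \<alpha>) js)"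

lemma ZL_carrier[simp]: "ZL z kk \<alpha> js \<in> carrier_mat (dl kk js) (dl kk js)"
  unfolding ZL_def carrier_mat_def by (induct js, auto simp: Let_def sob_J_def)

lemma ZL_psi: "ZL z kk \<alpha> js *\<^sub>v psi z kk \<beta> \<alpha> js p = psi z kk \<beta> \<alpha> js (pCons 0 p)"
proof (induct js)
  case Nil then show ?case by (auto simp: ZL_def)
next
  case (Cons j js)
  have eq: "ZL z kk \<alpha> (j#js) = four_block_mat (sob_J z kk \<alpha> j) (0\<^sub>m (kk j + 1) (dl kk js)) (0\<^sub>m (dl kk js) (kk j + 1)) (ZL z kk \<alpha> js)"
    using ZL_carrier[of z kk \<alpha> js] by (simp add: ZL_def Let_def sob_J_def)
  show ?case unfolding eq psi.simps
    by (subst mult_mat_vec_split[of _ "kk j + 1" _ "dl kk js"]) (auto simp: J_bpsi Cons J_carrier[of z kk \<alpha> j, simplified] bpsi_carrier(1)[of z kk \<beta> \<alpha> j p, simplified])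
qed




lemma bpsi_carrier'[simp]: "bpsi z kk \<beta> \<alpha> j p \<in> carrier_vec (Suc (kk j))"
  by (rule carrier_vecI) simp

lemma hp_one: "poly (pderiv ((pderiv ^^ r) 1)) x = (0::complex)"
proof -
  have "(pderiv ^^ Suc r) (1::complex poly) = 0" using hp_const[of r 1] by (simp only: pCons_one)
  thus ?thesis by simp
qed

lemma psi_add: "psi z kk \<beta> \<alpha> js (p + q) = psi z kk \<beta> \<alpha> js p + psi z kk \<beta> \<alpha> js q"
proof (induct js)
  case Nil then show ?case by auto
next
  case (Cons j js)
  have "bpsi z kk \<beta> \<alpha> j (p + q) = bpsi z kk \<beta> \<alpha> j p + bpsi z kk \<beta> \<alpha> j q"
    by (rule eq_vecI, auto simp: bpsi_def hp_add algebra_simps)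
  then show ?case unfolding psi.simps Cons
    by (subst append_vec_add[of _ "kk j + 1" _ _ "dl kk js"], auto)
qed

lemma psi_smult: "psi z kk \<beta> \<alpha> js (smult c p) = c \<cdot>\<^sub>v psi z kk \<beta> \<alpha> js p"
proof (induct js)
  case Nil then show ?case by auto
next
  case (Cons j js)
  have "bpsi z kk \<beta> \<alpha> j (smult c p) = c \<cdot>\<^sub>v bpsi z kk \<beta> \<alpha> j p"
    by (rule eq_vecI, auto simp: bpsi_def hp_smult algebra_simps)
  then show ?case using Cons by (intro eq_vecI, auto)
qed

lemma psi_zero: "psi z kk \<beta> \<alpha> js 0 = 0\<^sub>v (dl kk js)"
proof (rule eq_vecI)
  have h: "psi z kk \<beta> \<alpha> js 0 = 0 \<cdot>\<^sub>v psi z kk \<beta> \<alpha> js 0" using psi_smult[of z kk \<beta> \<alpha> js 0 0] by simp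
  fix i assume i: "i < dim_vec (0\<^sub>v (dl kk js) :: complex vec)"
  from arg_cong[OF h, of "\<lambda>v. v $ i"] i show "psi z kk \<beta> \<alpha> js 0 $ i = 0\<^sub>v (dl kk js) $ i" by simp
qed simp

lemma psi_idx_add: "i < dl kk js \<Longrightarrow> psi z kk \<beta> \<alpha> js (p + q) $ i = psi z kk \<beta> \<alpha> js p $ i + psi z kk \<beta> \<alpha> js q $ i"
  by (simp add: psi_add)

lemma psi_idx_smult: "i < dl kk js \<Longrightarrow> psi z kk \<beta> \<alpha> js (smult c p) $ i = c * psi z kk \<beta> \<alpha> js p $ i"
  by (simp add: psi_smult)

lemma psi_idx_sum: "i < dl kk js \<Longrightarrow> psi z kk \<beta> \<alpha> js (sum f S) $ i = (\<Sum>t\<in>S. psi z kk \<beta> \<alpha> js (f t) $ i)"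
proof (induct S rule: infinite_finite_induct)
  case (infinite A) then show ?case by (simp add: psi_zero)
next
  case empty then show ?case by (simp add: psi_zero)
next
  case (insert x F) then show ?case by (simp add: psi_idx_add)
qed

lemma conjugate_append: "conjugate (v @\<^sub>v w) = conjugate v @\<^sub>v conjugate (w :: complex vec)"
  by (rule eq_vecI, auto)

definition bip where "bip z kk \<beta> \<alpha> j p q = complex_of_real ((cmod (\<beta> j))\<^sup>2) *
     (\<Sum>r=0..kk j. complex_of_real ((cmod (cf \<alpha> j r))\<^sup>2) *
        cnj (poly ((pderiv ^^ r) q) (z j)) * poly ((pderiv ^^ r) p) (z j))"

lemma bpsi_ip: "bpsi z kk \<beta> \<alpha> j p \<bullet>c bpsi z kk \<beta> \<alpha> j q = bip z kk \<beta> \<alpha> j p q"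
proof -
  let ?K = "kk j"
  let ?g = "\<lambda>r. \<beta> j * cf \<alpha> j r * poly ((pderiv^^r) p) (z j) * cnj (\<beta> j * cf \<alpha> j r * poly ((pderiv^^r) q) (z j))"
  have "bpsi z kk \<beta> \<alpha> j p \<bullet>c bpsi z kk \<beta> \<alpha> j q = (\<Sum>s\<in>{0..?K}. ?g (?K - s))"
    unfolding scalar_prod_def by (rule sum.cong, auto simp: bpsi_def conjugate_complex_def)
  also have "\<dots> = (\<Sum>s\<in>{0..?K}. ?g s)"
    by (subst sum.atLeastAtMost_rev, simp)
  also have "\<dots> = bip z kk \<beta> \<alpha> j p q"
    unfolding bip_def sum_distrib_left complex_norm_square
    by (rule sum.cong, auto simp: algebra_simps)
  finally show ?thesis .
qed

lemma psi_ip: "psi z kk \<beta> \<alpha> js p \<bullet>c psi z kk \<beta> \<alpha> js q = (\<Sum>j\<leftarrow>js. bip z kk \<beta> \<alpha> j p q)"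
proof (induct js)
  case Nil then show ?case by (simp add: scalar_prod_def)
next
  case (Cons j js)
  show ?case unfolding psi.simps conjugate_append
    by (subst scalar_prod_append[of _ "kk j + 1" _ "dl kk js"], auto simp: bpsi_ip Cons)
qed

lemma sob_ip_psi: "sob_ip n z kk \<beta> \<alpha> p q = psi z kk \<beta> \<alpha> [1..<n+1] p \<bullet>c psi z kk \<beta> \<alpha> [1..<n+1] q"
proof -
  have "psi z kk \<beta> \<alpha> [1..<n+1] p \<bullet>c psi z kk \<beta> \<alpha> [1..<n+1] q = (\<Sum>j\<in>{1..<n+1}. bip z kk \<beta> \<alpha> j p q)"
    unfolding psi_ip sum_set_upt_conv_sum_list_nat[symmetric] set_upt by (rule refl)
  also have "\<dots> = sob_ip n z kk \<beta> \<alpha> p q"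
    unfolding sob_ip_def bip_def cf_def by (rule sum.cong, auto)
  finally show ?thesis by simp
qed

lemma psi_zero_block: assumes "\<forall>i < dl kk js. psi z kk \<beta> \<alpha> js p $ i = 0" "j \<in> set js" "s \<le> kk j"
  shows "bpsi z kk \<beta> \<alpha> j p $ s = 0"
  using assms
proof (induct js)
  case Nil then show ?case by simp
next
  case (Cons j' js)
  have A: "\<forall>i < kk j' + 1. bpsi z kk \<beta> \<alpha> j' p $ i = 0"
  proof (intro allI impI)
    fix i assume "i < kk j' + 1"
    thus "bpsi z kk \<beta> \<alpha> j' p $ i = 0" using Cons(2)[rule_format, of i] by simp
  qed
  have B: "\<forall>i < dl kk js. psi z kk \<beta> \<alpha> js p $ i = 0"
  proof (intro allI impI)
    fix i assume "i < dl kk js"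
    thus "psi z kk \<beta> \<alpha> js p $ i = 0" using Cons(2)[rule_format, of "kk j' + 1 + i"] by simp
  qed
  show ?case
  proof (cases "j = j'")
    case True then show ?thesis using A Cons(4) by auto
  next
    case False then show ?thesis using B Cons by auto
  qed
qed

lemma cf_nonzero: assumes "\<forall>i\<in>{1..r}. \<alpha> j i \<noteq> 0" shows "cf \<alpha> j r \<noteq> 0"
  using assms by (simp add: cf_def)

lemma bpsi_zero_deriv: assumes "bpsi z kk \<beta> \<alpha> j p $ s = 0" "s \<le> kk j" "\<beta> j \<noteq> 0"
  "\<forall>i\<in>{1..kk j}. \<alpha> j i \<noteq> 0"
  shows "poly ((pderiv^^(kk j - s)) p) (z j) = 0"
proof -
  have "cf \<alpha> j (kk j - s) \<noteq> 0" using assms(4) by (intro cf_nonzero) auto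
  thus ?thesis using assms(1-3) by (simp add: bpsi_def)
qed

lemma vec_of_list_append: "vec_of_list (xs @ ys) = vec_of_list xs @\<^sub>v vec_of_list ys"
proof -
  have "vec_of_list xs @\<^sub>v vec_of_list ys = vec_of_list (list_of_vec (vec_of_list xs @\<^sub>v vec_of_list ys))" by (simp only: vec_list)
  also have "\<dots> = vec_of_list (xs @ ys)" by (simp only: list_of_vec_append list_vec)
  finally show ?thesis by simp
qed

lemma w_psi: "vec_of_list (concat (map (\<lambda>j. replicate (kk j) 0 @ [\<beta> j]) js)) = psi z kk \<beta> \<alpha> js 1"
proof (induct js)
  case Nil then show ?case by (auto simp: vec_of_list_Nil)
next
  case (Cons j js)
  have "vec_of_list (replicate (kk j) 0 @ [\<beta> j]) = bpsi z kk \<beta> \<alpha> j 1"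
  proof (rule eq_vecI)
    fix s assume "s < dim_vec (bpsi z kk \<beta> \<alpha> j 1)"
    hence s: "s \<le> kk j" by simp
    show "vec_of_list (replicate (kk j) 0 @ [\<beta> j]) $ s = bpsi z kk \<beta> \<alpha> j 1 $ s"
    proof (cases "s < kk j")
      case True
      then obtain r where r: "kk j - s = Suc r" by (metis Suc_diff_Suc)
      show ?thesis using True s r by (simp add: vec_of_list_index nth_append bpsi_def hp_one)
    next
      case False
      then show ?thesis using s by (simp add: vec_of_list_index nth_append bpsi_def)
    qed
  qed simp
  moreover have "vec_of_list (concat (map (\<lambda>j. replicate (kk j) 0 @ [\<beta> j]) (j#js)))
     = vec_of_list (replicate (kk j) 0 @ [\<beta> j]) @\<^sub>v vec_of_list (concat (map (\<lambda>j. replicate (kk j) 0 @ [\<beta> j]) js))"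
    by (simp only: list.map concat.simps vec_of_list_append[of "replicate (kk j) 0 @ [\<beta> j]"])
  ultimately show ?case using Cons by simp
qed




lemma ZL_dim[simp]: "dim_row (ZL z kk \<alpha> js) = dl kk js" "dim_col (ZL z kk \<alpha> js) = dl kk js"
  using carrier_matD[OF ZL_carrier] by auto

lemma sob_m_dl: "sob_m n kk = dl kk [1..<n+1]"
  unfolding sob_m_def dl_def sum_set_upt_conv_sum_list_nat[symmetric] set_upt
  by (rule sum.cong, auto)

lemma sob_Z_ZL: "sob_Z n z kk \<alpha> = ZL z kk \<alpha> [1..<n+1]"
  unfolding sob_Z_def ZL_def ..

lemma sob_w_psi: "sob_w n kk \<beta> = psi z kk \<beta> \<alpha> [1..<n+1] 1"
  unfolding sob_w_def by (rule w_psi)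

lemma poly_mat_carrier: assumes "A \<in> carrier_mat d d" shows "poly_mat p A \<in> carrier_mat d d"
proof -
  have "foldr (\<lambda>c B. c \<cdot>\<^sub>m 1\<^sub>m (dim_row A) + A * B) xs (0\<^sub>m (dim_row A) (dim_row A)) \<in> carrier_mat d d" for xs
    using assms by (induct xs, auto)
  thus ?thesis unfolding poly_mat_def .
qed

lemma poly_mat_0: "poly_mat 0 A = 0\<^sub>m (dim_row A) (dim_row A)"
  unfolding poly_mat_def by simp

lemma poly_mat_pCons: assumes A: "A \<in> carrier_mat d d"
  shows "poly_mat (pCons a p) A = a \<cdot>\<^sub>m 1\<^sub>m d + A * poly_mat p A"
proof (cases "coeffs p = [] \<and> a = 0")
  case True
  hence p: "p = 0" "a = 0" by auto
  have "a \<cdot>\<^sub>m 1\<^sub>m d + A * poly_mat p A = 0\<^sub>m d d"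
    using A p by (intro eq_matI, auto simp: poly_mat_0)
  thus ?thesis using A p by (simp add: poly_mat_0)
next
  case False
  hence "coeffs (pCons a p) = a # coeffs p" by (auto simp: cCons_def)
  thus ?thesis using A unfolding poly_mat_def by simp
qed

lemma smult_one_mult_vec: "v \<in> carrier_vec d \<Longrightarrow> (a \<cdot>\<^sub>m 1\<^sub>m d) *\<^sub>v v = a \<cdot>\<^sub>v (v :: complex vec)"
proof (rule eq_vecI)
  fix i assume v: "v \<in> carrier_vec d" and i: "i < dim_vec (a \<cdot>\<^sub>v v)"
  hence i': "i < d" by simp
  have "(\<Sum>ia = 0..<d. a * (if ia = i then 1 else 0) * v $ ia) = (\<Sum>ia = 0..<d. if i = ia then a * v $ i else 0)"
    by (rule sum.cong) auto
  thus "((a \<cdot>\<^sub>m 1\<^sub>m d) *\<^sub>v v) $ i = (a \<cdot>\<^sub>v v) $ i" using v i' by (simp add: scalar_prod_def)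
qed auto

lemma phi_psi: "poly_mat p (ZL z kk \<alpha> js) *\<^sub>v psi z kk \<beta> \<alpha> js 1 = psi z kk \<beta> \<alpha> js p"
proof (induct p rule: pCons_induct)
  case 0
  show ?case by (simp add: poly_mat_0 psi_zero, intro eq_vecI, auto simp: scalar_prod_def)
next
  case (pCons a p)
  let ?Z = "ZL z kk \<alpha> js" and ?d = "dl kk js"
  have P: "poly_mat p ?Z \<in> carrier_mat ?d ?d" by (rule poly_mat_carrier, simp)
  have "poly_mat (pCons a p) ?Z *\<^sub>v psi z kk \<beta> \<alpha> js 1
     = (a \<cdot>\<^sub>m 1\<^sub>m ?d) *\<^sub>v psi z kk \<beta> \<alpha> js 1 + (?Z * poly_mat p ?Z) *\<^sub>v psi z kk \<beta> \<alpha> js 1"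
    unfolding poly_mat_pCons[OF ZL_carrier]
    by (rule add_mult_distrib_mat_vec[of _ ?d ?d], insert P, auto)
  also have "\<dots> = a \<cdot>\<^sub>v psi z kk \<beta> \<alpha> js 1 + ?Z *\<^sub>v psi z kk \<beta> \<alpha> js p"
    using P pCons(2) by (simp add: smult_one_mult_vec assoc_mult_mat_vec[of _ ?d ?d _ ?d])
  also have "\<dots> = psi z kk \<beta> \<alpha> js (smult a 1) + psi z kk \<beta> \<alpha> js (pCons 0 p)"
    by (simp only: psi_smult ZL_psi)
  also have "\<dots> = psi z kk \<beta> \<alpha> js (pCons a p)"
    unfolding psi_add[symmetric] by simp
  finally show ?case .
qed

lemma Zpow_psi: "(ZL z kk \<alpha> js ^\<^sub>m t) *\<^sub>v psi z kk \<beta> \<alpha> js p = psi z kk \<beta> \<alpha> js ([:0,1:]^t * p)"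
proof (induct t arbitrary: p)
  case 0 then show ?case using ZL_carrier[of z kk \<alpha> js] by simp
next
  case (Suc t)
  let ?Z = "ZL z kk \<alpha> js" and ?d = "dl kk js"
  have "(?Z ^\<^sub>m Suc t) *\<^sub>v psi z kk \<beta> \<alpha> js p = (?Z ^\<^sub>m t) *\<^sub>v (?Z *\<^sub>v psi z kk \<beta> \<alpha> js p)"
    by (simp, rule assoc_mult_mat_vec[of _ ?d ?d _ ?d], auto)
  also have "\<dots> = psi z kk \<beta> \<alpha> js ([:0,1:]^t * pCons 0 p)" by (simp add: ZL_psi Suc)
  also have "[:0,1:]^t * pCons 0 p = [:0,1:]^Suc t * p" by (simp add: algebra_simps)
  finally show ?case .
qed




lemma derivs_order: assumes "p \<noteq> 0" "\<forall>r\<le>K. poly ((pderiv^^r) p) a = (0::complex)"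
  shows "Suc K \<le> order a p"
  using assms
proof (induct K arbitrary: p)
  case 0
  hence "poly p a = 0" by auto
  hence "order a p \<noteq> 0" using 0(1) order_root[of p a] by auto
  thus ?case by simp
next
  case (Suc K)
  have pa: "poly p a = 0" using Suc(3)[rule_format, of 0] by simp
  have dp: "pderiv p \<noteq> 0"
  proof
    assume "pderiv p = 0"
    hence "degree p = 0" by (simp add: pderiv_eq_0_iff)
    then obtain c where "p = [:c:]" by (metis degree_eq_zeroE)
    thus False using pa Suc(2) by simp
  qed
  have "\<forall>r\<le>K. poly ((pderiv^^r) (pderiv p)) a = 0"
  proof (intro allI impI)
    fix r assume "r \<le> K"
    hence "poly ((pderiv^^(Suc r)) p) a = 0" using Suc(3) by auto
    thus "poly ((pderiv^^r) (pderiv p)) a = 0" by (simp only: funpow_Suc_right o_apply)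
  qed
  from Suc(1)[OF dp this] have "Suc K \<le> order a (pderiv p)" .
  moreover have "order a p = Suc (order a (pderiv p))" by (rule order_pderiv[OF Suc(2) pa])
  ultimately show ?case by simp
qed

lemma derivs_dvd: assumes "\<forall>r\<le>K. poly ((pderiv^^r) p) a = (0::complex)"
  shows "[:-a, 1:] ^ Suc K dvd p"
proof (cases "p = 0")
  case False
  have "[:-a, 1:] ^ Suc K dvd [:-a, 1:] ^ order a p"
    using derivs_order[OF False assms] by (rule le_imp_power_dvd)
  thus ?thesis using order_1 dvd_trans by blast
qed simp

lemma coprime_lin: assumes "a \<noteq> (b::complex)" shows "coprime [:-a, 1:] [:-b, 1:]"
proof (rule coprimeI)
  fix c assume c1: "c dvd [:-a, 1:]" and c2: "c dvd [:-b, 1:]"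
  have "c dvd [:-a, 1:] - [:-b, 1:]" using c1 c2 by (rule dvd_diff)
  moreover have "[:-a, 1:] - [:-b, 1:] = [:b - a:]" by simp
  ultimately have cd: "c dvd [:b - a:]" by simp
  have nz: "[:b - a:] \<noteq> 0" using assms by simp
  hence "c \<noteq> 0" using cd by auto
  moreover have "degree c = 0" using dvd_imp_degree_le[OF cd nz] by simp
  ultimately show "is_unit c" by (simp add: is_unit_iff_degree)
qed

lemma prod_dvd: assumes "finite S" "inj_on z S" "\<forall>j\<in>S. [:-z j, 1:] ^ e j dvd (p::complex poly)"
  shows "(\<Prod>j\<in>S. [:-z j, 1:] ^ e j) dvd p"
  using assms
proof (induct S rule: finite_induct)
  case empty then show ?case by simp
next
  case (insert x F)
  have "coprime ([:-z x, 1:] ^ e x) (\<Prod>j\<in>F. [:-z j, 1:] ^ e j)"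
  proof (rule prod_coprime_right)
    fix j assume j: "j \<in> F"
    have "z x \<noteq> z j" using insert(2,4) j by (auto simp: inj_on_def)
    thus "coprime ([:-z x, 1:] ^ e x) ([:-z j, 1:] ^ e j)" using coprime_lin by simp
  qed
  moreover have "(\<Prod>j\<in>F. [:-z j, 1:] ^ e j) dvd p" using insert by (auto simp: inj_on_def)
  moreover have "[:-z x, 1:] ^ e x dvd p" using insert by auto
  ultimately have "[:-z x, 1:] ^ e x * (\<Prod>j\<in>F. [:-z j, 1:] ^ e j) dvd p"
    by (intro divides_mult)
  thus ?case using insert by simp
qed

lemma degree_prod_lin: "finite S \<Longrightarrow> degree (\<Prod>j\<in>S. [:-z j, 1:] ^ e j :: complex poly) = (\<Sum>j\<in>S. e j)"
  by (subst degree_prod_sum_eq, auto simp: degree_linear_power)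

lemma psi_inj:
  assumes z: "inj_on z {1..n}" and b: "\<forall>j\<in>{1..n}. \<beta> j \<noteq> 0"
    and a: "\<forall>j\<in>{1..n}. \<forall>i\<in>{1..kk j}. \<alpha> j i \<noteq> 0"
    and ps: "psi z kk \<beta> \<alpha> [1..<n+1] p = psi z kk \<beta> \<alpha> [1..<n+1] 0"
    and d: "degree p < sob_m n kk"
  shows "p = 0"
proof (rule ccontr)
  assume p0: "p \<noteq> 0"
  have z0: "\<forall>i < dl kk [1..<n+1]. psi z kk \<beta> \<alpha> [1..<n+1] p $ i = 0"
    using ps by (simp add: psi_zero)
  have dv: "\<forall>j\<in>{1..n}. [:-z j, 1:] ^ (kk j + 1) dvd p"
  proof
    fix j assume j: "j \<in> {1..n}"
    have "\<forall>r\<le>kk j. poly ((pderiv^^r) p) (z j) = 0"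
    proof (intro allI impI)
      fix r assume r: "r \<le> kk j"
      have js: "j \<in> set [1..<n+1]" using j by auto
      have "bpsi z kk \<beta> \<alpha> j p $ (kk j - r) = 0" using psi_zero_block[OF z0 js] by simp
      from bpsi_zero_deriv[OF this _ bspec[OF b j] bspec[OF a j]]
      show "poly ((pderiv^^r) p) (z j) = 0" using r by simp
    qed
    thus "[:-z j, 1:] ^ (kk j + 1) dvd p" using derivs_dvd by simp
  qed
  have "(\<Prod>j\<in>{1..n}. [:-z j, 1:] ^ (kk j + 1)) dvd p" by (rule prod_dvd[OF _ z dv], simp)
  from dvd_imp_degree_le[OF this p0] have "sob_m n kk \<le> degree p"
    unfolding degree_prod_lin[OF finite_atLeastAtMost] sob_m_def .
  thus False using d by simp
qed




definition pspan :: "(nat \<Rightarrow> complex poly) \<Rightarrow> nat \<Rightarrow> complex poly set" where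
  "pspan g L = {(\<Sum>t<L. smult (c t) (g t)) | c. True}"

definition Pd :: "nat \<Rightarrow> complex poly set" where
  "Pd L = {p. p = 0 \<or> degree p < L}"

lemma Pspace_Pd: "Pspace (int l) = Pd (Suc l)" "Pspace (int l - 1) = Pd l"
  unfolding Pspace_def Pd_def by auto

lemma pspan_sub: assumes "\<forall>t<L. degree (g t) \<le> t" shows "pspan g L \<subseteq> Pd L"
proof
  fix p assume "p \<in> pspan g L"
  then obtain c where p: "p = (\<Sum>t<L. smult (c t) (g t))" unfolding pspan_def by auto
  show "p \<in> Pd L"
  proof (cases L)
    case 0 then show ?thesis using p by (simp add: Pd_def)
  next
    case (Suc L')
    have "degree p \<le> L'" unfolding p
      by (rule degree_sum_le, simp, rule order.trans[OF degree_smult_le], insert assms Suc, auto)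
    thus ?thesis using Suc by (simp add: Pd_def)
  qed
qed

lemma pspan_exact: assumes "\<forall>t<L. g t \<noteq> 0 \<and> degree (g t) = t" shows "pspan g L = Pd L"
  using assms
proof (induct L)
  case 0 then show ?case by (auto simp: pspan_def Pd_def)
next
  case (Suc L)
  show ?case
  proof
    show "pspan g (Suc L) \<subseteq> Pd (Suc L)" by (rule pspan_sub, insert Suc(2), auto)
  next
    show "Pd (Suc L) \<subseteq> pspan g (Suc L)"
    proof
      fix p assume p: "p \<in> Pd (Suc L)"
      have gL: "g L \<noteq> 0" "degree (g L) = L" using Suc(2) by auto
      hence lc: "coeff (g L) L \<noteq> 0" by (metis leading_coeff_0_iff)
      define a where "a = coeff p L / coeff (g L) L"
      define q where "q = p - smult a (g L)"
      have cq: "coeff q L = 0" unfolding q_def a_def using lc by simp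
      have dq: "degree q \<le> L" unfolding q_def using p gL
        by (intro degree_diff_le, auto simp: Pd_def)
      have "q \<in> Pd L"
      proof (cases "q = 0")
        case False
        hence "degree q \<noteq> L" using cq by (metis leading_coeff_0_iff)
        thus ?thesis using dq by (simp add: Pd_def)
      qed (simp add: Pd_def)
      hence "q \<in> pspan g L" using Suc by auto
      then obtain c where c: "q = (\<Sum>t<L. smult (c t) (g t))" unfolding pspan_def by auto
      have "p = q + smult a (g L)" unfolding q_def by simp
      also have "\<dots> = (\<Sum>t<Suc L. smult ((c(L := a)) t) (g t))"
      proof -
        have "(\<Sum>t<Suc L. smult ((c(L:=a)) t) (g t)) = (\<Sum>t<L. smult ((c(L:=a)) t) (g t)) + smult a (g L)" by simp
        moreover have "(\<Sum>t<L. smult ((c(L:=a)) t) (g t)) = (\<Sum>t<L. smult (c t) (g t))" by (rule sum.cong) auto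
        ultimately show ?thesis unfolding c by simp
      qed
      finally show "p \<in> pspan g (Suc L)" unfolding pspan_def by blast
    qed
  qed
qed

lemma mat_of_cols_mult_idx: assumes "set vs \<subseteq> carrier_vec d" "c \<in> carrier_vec (length vs)" "i < d"
  shows "(mat_of_cols d vs *\<^sub>v c) $ i = (\<Sum>t<length vs. vs ! t $ i * c $ t)"
  using assms by (simp add: scalar_prod_def mat_of_cols_def row_def atLeast0LessThan)

lemma span_psi: "span_list (dl kk js) (map (\<lambda>t. psi z kk \<beta> \<alpha> js (g t)) [0..<L]) = psi z kk \<beta> \<alpha> js ` pspan g L"
proof -
  let ?vs = "map (\<lambda>t. psi z kk \<beta> \<alpha> js (g t)) [0..<L]"
  let ?d = "dl kk js"
  have vs: "set ?vs \<subseteq> carrier_vec ?d" by auto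
  have key: "(mat_of_cols ?d ?vs *\<^sub>v vec L c) = psi z kk \<beta> \<alpha> js (\<Sum>t<L. smult (c t) (g t))" for c
  proof (rule eq_vecI)
    fix i assume "i < dim_vec (psi z kk \<beta> \<alpha> js (\<Sum>t<L. smult (c t) (g t)))"
    hence i: "i < ?d" by simp
    have "(mat_of_cols ?d ?vs *\<^sub>v vec L c) $ i = (\<Sum>t<L. psi z kk \<beta> \<alpha> js (g t) $ i * c t)"
      using mat_of_cols_mult_idx[OF vs _ i, of "vec L c"] by simp
    also have "\<dots> = psi z kk \<beta> \<alpha> js (\<Sum>t<L. smult (c t) (g t)) $ i"
      using i by (simp add: psi_idx_sum psi_idx_smult mult.commute)
    finally show "(mat_of_cols ?d ?vs *\<^sub>v vec L c) $ i = psi z kk \<beta> \<alpha> js (\<Sum>t<L. smult (c t) (g t)) $ i" .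
  qed simp
  show ?thesis
  proof
    show "span_list ?d ?vs \<subseteq> psi z kk \<beta> \<alpha> js ` pspan g L"
    proof
      fix x assume "x \<in> span_list ?d ?vs"
      then obtain c where x: "x = mat_of_cols ?d ?vs *\<^sub>v c" and c: "c \<in> carrier_vec L"
        unfolding span_list_def by auto
      have "c = vec L (\<lambda>t. c $ t)" using c by auto
      hence "x = psi z kk \<beta> \<alpha> js (\<Sum>t<L. smult (c $ t) (g t))" using x key by metis
      thus "x \<in> psi z kk \<beta> \<alpha> js ` pspan g L" unfolding pspan_def by blast
    qed
  next
    show "psi z kk \<beta> \<alpha> js ` pspan g L \<subseteq> span_list ?d ?vs"
    proof
      fix x assume "x \<in> psi z kk \<beta> \<alpha> js ` pspan g L"
      then obtain c where x: "x = psi z kk \<beta> \<alpha> js (\<Sum>t<L. smult (c t) (g t))" unfolding pspan_def by auto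
      hence "x = mat_of_cols ?d ?vs *\<^sub>v vec L c" using key by simp
      thus "x \<in> span_list ?d ?vs" unfolding span_list_def by fastforce
    qed
  qed
qed

lemma mem_span: assumes "set vs \<subseteq> carrier_vec d" "l < length vs" shows "vs ! l \<in> span_list d vs"
proof -
  have vl: "vs ! l \<in> carrier_vec d" using assms nth_mem by blast
  have "mat_of_cols d vs *\<^sub>v unit_vec (length vs) l = vs ! l"
  proof (rule eq_vecI)
    fix i assume "i < dim_vec (vs ! l)"
    hence i: "i < d" using vl by auto
    have "(mat_of_cols d vs *\<^sub>v unit_vec (length vs) l) $ i = (\<Sum>t<length vs. vs ! t $ i * unit_vec (length vs) l $ t)"
      by (rule mat_of_cols_mult_idx[OF assms(1) _ i], simp)
    also have "\<dots> = (\<Sum>t<length vs. if t = l then vs ! l $ i else 0)"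
      by (rule sum.cong, auto simp: unit_vec_def)
    also have "\<dots> = vs ! l $ i" using assms(2) by simp
    finally show "(mat_of_cols d vs *\<^sub>v unit_vec (length vs) l) $ i = vs ! l $ i" .
  qed (insert assms vl, auto)
  thus ?thesis unfolding span_list_def by (metis (mono_tags, lifting) mem_Collect_eq unit_vec_carrier)
qed

lemma lincomb_ip: fixes vs :: "complex vec list" assumes "set vs \<subseteq> carrier_vec d" "c \<in> carrier_vec (length vs)" "u \<in> carrier_vec d"
  shows "(mat_of_cols d vs *\<^sub>v c) \<bullet>c u = (\<Sum>t<length vs. c $ t * (vs ! t \<bullet>c u))"
proof -
  have "(mat_of_cols d vs *\<^sub>v c) \<bullet>c u = (\<Sum>i<d. (\<Sum>t<length vs. vs ! t $ i * c $ t) * conjugate (u $ i))"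
    unfolding scalar_prod_def using assms mat_of_cols_mult_idx[OF assms(1,2)]
    by (simp add: atLeast0LessThan)
  also have "\<dots> = (\<Sum>i<d. \<Sum>t<length vs. c $ t * (vs ! t $ i * conjugate (u $ i)))"
    unfolding sum_distrib_right by (intro sum.cong refl, simp add: ac_simps)
  also have "\<dots> = (\<Sum>t<length vs. \<Sum>i<d. c $ t * (vs ! t $ i * conjugate (u $ i)))"
    by (rule sum.swap)
  also have "\<dots> = (\<Sum>t<length vs. c $ t * (vs ! t \<bullet>c u))"
    using assms by (intro sum.cong refl, simp add: scalar_prod_def sum_distrib_left atLeast0LessThan)
  finally show ?thesis .
qed

lemma psi_idx_diff: "i < dl kk js \<Longrightarrow> psi z kk \<beta> \<alpha> js (p - q) $ i = psi z kk \<beta> \<alpha> js p $ i - psi z kk \<beta> \<alpha> js q $ i"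
proof -
  assume i: "i < dl kk js"
  have "p - q = p + smult (-1) q" by simp
  thus ?thesis using i by (simp only: psi_idx_add psi_idx_smult) simp
qed




lemma AR_entry:
  assumes Z: "Z \<in> carrier_mat m m" and Q: "Q \<in> carrier_mat m k" and H: "H \<in> carrier_mat k k"
    and q: "q \<in> carrier_vec m"
  shows "arnoldi_rel Z Q H h q k \<longleftrightarrow> (\<forall>i<m. \<forall>c<k. (Z *\<^sub>v col Q c) $ i =
     (\<Sum>t<k. Q $$ (i,t) * H $$ (t,c)) + (if c = k - 1 then complex_of_real h * q $ i else 0))"
proof -
  let ?R = "complex_of_real h \<cdot>\<^sub>m (mat_of_cols (dim_vec q) [q] * mat_of_rows k [unit_vec k (k - 1)])"
  have dq: "dim_vec q = m" using q by auto
  have E1: "(Z * Q) $$ (i,c) = (Z *\<^sub>v col Q c) $ i" if "i < m" "c < k" for i c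
    using that Z Q by simp
  have E2: "(Q * H + ?R) $$ (i,c) = (\<Sum>t<k. Q $$ (i,t) * H $$ (t,c)) + (if c = k - 1 then complex_of_real h * q $ i else 0)"
    if i: "i < m" and c: "c < k" for i c
  proof -
    have "(Q * H) $$ (i,c) = (\<Sum>t<k. Q $$ (i,t) * H $$ (t,c))"
      using i c Q H by (simp add: scalar_prod_def atLeast0LessThan)
    moreover have "?R $$ (i,c) = (if c = k - 1 then complex_of_real h * q $ i else 0)"
      using i c dq by (simp add: scalar_prod_def mat_of_cols_def mat_of_rows_def)
    ultimately show ?thesis using i c Q H dq by simp
  qed
  show ?thesis
  proof
    assume A: "arnoldi_rel Z Q H h q k"
    show "\<forall>i<m. \<forall>c<k. (Z *\<^sub>v col Q c) $ i = (\<Sum>t<k. Q $$ (i,t) * H $$ (t,c)) + (if c = k - 1 then complex_of_real h * q $ i else 0)"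
    proof (intro allI impI)
      fix i c assume i: "i < m" and c: "c < k"
      have "(Z * Q) $$ (i,c) = (Q * H + ?R) $$ (i,c)" using A unfolding arnoldi_rel_def by simp
      thus "(Z *\<^sub>v col Q c) $ i = (\<Sum>t<k. Q $$ (i,t) * H $$ (t,c)) + (if c = k - 1 then complex_of_real h * q $ i else 0)"
        using E1[OF i c] E2[OF i c] by simp
    qed
  next
    assume B: "\<forall>i<m. \<forall>c<k. (Z *\<^sub>v col Q c) $ i = (\<Sum>t<k. Q $$ (i,t) * H $$ (t,c)) + (if c = k - 1 then complex_of_real h * q $ i else 0)"
    show "arnoldi_rel Z Q H h q k" unfolding arnoldi_rel_def
    proof (rule eq_matI)
      fix i c assume "i < dim_row (Q * H + ?R)" "c < dim_col (Q * H + ?R)"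
      hence i: "i < m" and c: "c < k" using Q H dq by auto
      show "(Z * Q) $$ (i,c) = (Q * H + ?R) $$ (i,c)" using E1[OF i c] E2[OF i c] B i c by simp
    qed (insert Z Q H dq, auto)
  qed
qed

lemma psi_inj2:
  assumes z: "inj_on z {1..n}" and b: "\<forall>j\<in>{1..n}. \<beta> j \<noteq> 0"
    and a: "\<forall>j\<in>{1..n}. \<forall>i\<in>{1..kk j}. \<alpha> j i \<noteq> 0"
    and ps: "\<forall>i < sob_m n kk. psi z kk \<beta> \<alpha> [1..<n+1] p $ i = psi z kk \<beta> \<alpha> [1..<n+1] q $ i"
    and dp: "degree p < sob_m n kk" and dq: "degree q < sob_m n kk"
  shows "p = q"
proof -
  have "psi z kk \<beta> \<alpha> [1..<n+1] (p - q) = psi z kk \<beta> \<alpha> [1..<n+1] 0"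
    using ps by (intro eq_vecI, auto simp: psi_idx_diff psi_zero sob_m_dl)
  moreover have "degree (p - q) < sob_m n kk"
    using dp dq degree_diff_le_max[of p q] by simp
  ultimately have "p - q = 0" by (rule psi_inj[OF z b a])
  thus ?thesis by simp
qed

lemma adj_entry: assumes "Q \<in> carrier_mat m k" "a < k" "b < k"
  shows "(mat_adjoint Q * Q) $$ (a,b) = col Q b \<bullet>c col Q a"
proof -
  have "(mat_adjoint Q * Q) $$ (a,b) = conjugate (col Q a) \<bullet> col Q b"
    using assms by (simp add: mat_adjoint_def)
  also have "\<dots> = col Q b \<bullet>c col Q a"
    by (rule comm_scalar_prod[of _ m], insert assms, auto)
  finally show ?thesis .
qed




lemma Zc: "sob_Z n z kk \<alpha> \<in> carrier_mat (sob_m n kk) (sob_m n kk)"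
  unfolding sob_Z_ZL sob_m_dl by (rule ZL_carrier)

lemma dw: "dim_vec (sob_w n kk \<beta>) = sob_m n kk"
  unfolding sob_w_psi[of n kk \<beta> z \<alpha>] sob_m_dl by simp

lemma phi_eq: "poly_mat p (sob_Z n z kk \<alpha>) *\<^sub>v sob_w n kk \<beta> = psi z kk \<beta> \<alpha> [1..<n+1] p"
  unfolding sob_Z_ZL sob_w_psi[of n kk \<beta> z \<alpha>] by (rule phi_psi)

lemma Zmul: "sob_Z n z kk \<alpha> *\<^sub>v psi z kk \<beta> \<alpha> [1..<n+1] p = psi z kk \<beta> \<alpha> [1..<n+1] (pCons 0 p)"
  unfolding sob_Z_ZL by (rule ZL_psi)

lemma KR_eq: "krylov (sob_Z n z kk \<alpha>) (sob_w n kk \<beta>) i = psi z kk \<beta> \<alpha> [1..<n+1] ` Pd i"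
proof -
  have M: "map (\<lambda>t. (sob_Z n z kk \<alpha> ^\<^sub>m t) *\<^sub>v sob_w n kk \<beta>) [0..<i]
      = map (\<lambda>t. psi z kk \<beta> \<alpha> [1..<n+1] ([:0,1:]^t)) [0..<i]"
    unfolding sob_Z_ZL sob_w_psi[of n kk \<beta> z \<alpha>] by (simp add: Zpow_psi)
  have "krylov (sob_Z n z kk \<alpha>) (sob_w n kk \<beta>) i = psi z kk \<beta> \<alpha> [1..<n+1] ` pspan (\<lambda>t. [:0,1:]^t) i"
    unfolding krylov_def dw[of n kk \<beta>] sob_m_dl M by (rule span_psi)
  also have "pspan (\<lambda>t. [:0,1:]^t) i = Pd i"
    by (rule pspan_exact, auto simp: degree_linear_power[of "0::complex"])
  finally show ?thesis .
qed

lemma psi_rhs: assumes "i < dl kk js"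
  shows "psi z kk \<beta> \<alpha> js ((\<Sum>t<k. smult (a t) (p t)) + (if b then smult e r else 0)) $ i
    = (\<Sum>t<k. a t * psi z kk \<beta> \<alpha> js (p t) $ i) + (if b then e * psi z kk \<beta> \<alpha> js r $ i else 0)"
  using assms by (cases b, auto simp: psi_idx_add psi_idx_sum psi_idx_smult psi_zero)

lemma poly_rhs: "poly ((\<Sum>t<k. smult (a t) (p t)) + (if b then smult e r else 0)) x
    = (\<Sum>t<k. poly (p t) x * a t) + (if b then e * poly r x else 0)"
  by (cases b, auto simp: poly_sum mult.commute)

lemma degree_rhs: assumes "\<forall>t<k. degree (p t) \<le> k" "degree r \<le> k"
  shows "degree ((\<Sum>t<k. smult (a t) (p t :: complex poly)) + (if b then smult e r else 0)) \<le> k"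
proof -
  have "degree (\<Sum>t<k. smult (a t) (p t)) \<le> k"
    by (rule degree_sum_le, simp, rule order.trans[OF degree_smult_le], insert assms, auto)
  moreover have "degree (if b then smult e r else 0) \<le> k"
    using assms degree_smult_le[of e r] by auto
  ultimately show ?thesis using degree_add_le by blast
qed

lemma degree_pCons0: "degree (p :: complex poly) \<le> c \<Longrightarrow> degree (pCons 0 p) \<le> Suc c"
  by (cases "p = 0", auto)




lemma dir1:
  fixes n k :: nat and z \<beta> :: "nat \<Rightarrow> complex" and kk :: "nat \<Rightarrow> nat"
    and \<alpha> :: "nat \<Rightarrow> nat \<Rightarrow> complex"
  assumes zi: "inj_on z {1..n}"
    and bn: "\<forall>j\<in>{1..n}. \<beta> j \<noteq> 0"
    and an: "\<forall>j\<in>{1..n}. \<forall>i\<in>{1..kk j}. \<alpha> j i \<noteq> 0"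
    and k1: "1 \<le> k" and km: "k < sob_m n kk"
    and ON: "nested_onb Q (sob_Z n z kk \<alpha>) (sob_w n kk \<beta>) k"
    and Hc: "H \<in> carrier_mat k k" and h0: "h > 0"
    and qc: "q \<in> carrier_vec (sob_m n kk)" and qq: "q \<bullet>c q = 1"
    and qQ: "mat_adjoint (mat_of_cols (sob_m n kk) [q]) * Q = 0\<^sub>m 1 k"
    and AR: "arnoldi_rel (sob_Z n z kk \<alpha>) Q H h q k"
  shows "(\<exists>p. \<forall>l\<le>k. p l \<in> Pspace (int l) \<and>
             poly_mat (p l) (sob_Z n z kk \<alpha>) *\<^sub>v sob_w n kk \<beta> = (if l < k then col Q l else q)) \<and>
      (\<forall>p. (\<forall>l\<le>k. p l \<in> Pspace (int l) \<and>
             poly_mat (p l) (sob_Z n z kk \<alpha>) *\<^sub>v sob_w n kk \<beta> = (if l < k then col Q l else q))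
         \<longrightarrow> sobolev_orthonormal (sob_ip n z kk \<beta> \<alpha>) p k \<and> poly_recurrence p H h k)"
proof -
  define m where "m = sob_m n kk"
  define Z where "Z = sob_Z n z kk \<alpha>"
  define w where "w = sob_w n kk \<beta>"
  define Ps where "Ps = psi z kk \<beta> \<alpha> [1..<n+1]"
  have mdl: "dl kk [1..<n+1] = m" unfolding m_def sob_m_dl ..
  have Zc: "Z \<in> carrier_mat m m" unfolding Z_def m_def by (rule Zc)
  have dw: "dim_vec w = m" unfolding w_def m_def by (rule dw)
  have phi: "\<And>p. poly_mat p Z *\<^sub>v w = Ps p" unfolding Z_def w_def Ps_def by (rule phi_eq)
  have KR: "\<And>i. krylov Z w i = Ps ` Pd i" unfolding Z_def w_def Ps_def by (rule KR_eq)
  have Zm: "\<And>p. Z *\<^sub>v Ps p = Ps (pCons 0 p)" unfolding Z_def Ps_def by (rule Zmul)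
  have Psc: "\<And>p. Ps p \<in> carrier_vec m" unfolding Ps_def mdl[symmetric] by simp
  have Qc: "Q \<in> carrier_mat m k" and QQ: "mat_adjoint Q * Q = 1\<^sub>m k"
    and SP: "\<And>i. i \<in> {1..k} \<Longrightarrow> span_list m (map (col Q) [0..<i]) = krylov Z w i"
    using ON unfolding nested_onb_def dw[unfolded w_def] Z_def w_def m_def by auto
  have colc: "\<And>t. col Q t \<in> carrier_vec m" using Qc by auto
  have qc': "q \<in> carrier_vec m" using qc m_def by simp
  have ARe: "\<forall>i<m. \<forall>c<k. (Z *\<^sub>v col Q c) $ i =
     (\<Sum>t<k. Q $$ (i,t) * H $$ (t,c)) + (if c = k - 1 then complex_of_real h * q $ i else 0)"
    using AR_entry[OF Zc Qc Hc qc'] AR unfolding Z_def by simp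
  have ex: "\<exists>p. p \<in> Pd (Suc l) \<and> Ps p = col Q l" if l: "l < k" for l
  proof -
    have "map (col Q) [0..<Suc l] ! l = col Q l" by (simp add: nth_append)
    moreover have "set (map (col Q) [0..<Suc l]) \<subseteq> carrier_vec m" using colc by auto
    ultimately have "col Q l \<in> span_list m (map (col Q) [0..<Suc l])"
      using mem_span[of "map (col Q) [0..<Suc l]" m l] by simp
    also have "\<dots> = Ps ` Pd (Suc l)" using SP[of "Suc l"] l KR by simp
    finally show ?thesis by auto
  qed
  define P0 where "P0 l = (SOME p. p \<in> Pd (Suc l) \<and> Ps p = col Q l)" for l
  have P0: "P0 l \<in> Pd (Suc l) \<and> Ps (P0 l) = col Q l" if "l < k" for l
    unfolding P0_def by (rule someI_ex, rule ex[OF that])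
  have QP0: "Q $$ (i,t) = Ps (P0 t) $ i" if "i < m" "t < k" for i t
    using P0[OF that(2)] that Qc by auto
  define pk where "pk = smult (1 / complex_of_real h) (pCons 0 (P0 (k-1)) - (\<Sum>t<k. smult (H $$ (t,k-1)) (P0 t)))"
  have hne: "complex_of_real h \<noteq> 0" using h0 by simp
  have Pspk: "Ps pk = q"
  proof (rule eq_vecI)
    fix i assume "i < dim_vec q"
    hence i: "i < m" using qc' by auto
    have i': "i < dl kk [1..<n+1]" using i mdl by simp
    have "Ps pk $ i = (1 / complex_of_real h) * (Ps (pCons 0 (P0 (k-1))) $ i - (\<Sum>t<k. H $$ (t,k-1) * Ps (P0 t) $ i))"
      unfolding pk_def Ps_def by (simp only: psi_idx_smult[OF i'] psi_idx_diff[OF i'] psi_idx_sum[OF i'])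
    also have "Ps (pCons 0 (P0 (k-1))) $ i = (Z *\<^sub>v col Q (k-1)) $ i"
      using Zm[of "P0 (k-1)"] P0[of "k-1"] k1 by auto
    also have "\<dots> = (\<Sum>t<k. Q $$ (i,t) * H $$ (t,k-1)) + complex_of_real h * q $ i"
      using ARe i k1 by simp
    also have "(\<Sum>t<k. Q $$ (i,t) * H $$ (t,k-1)) = (\<Sum>t<k. H $$ (t,k-1) * Ps (P0 t) $ i)"
      by (rule sum.cong, auto simp: QP0[OF i])
    finally show "Ps pk $ i = q $ i" using hne by simp
  qed (simp add: carrier_vecD[OF Psc] carrier_vecD[OF qc'])
  have dpk: "degree pk \<le> k"
  proof -
    have "degree (P0 (k-1)) \<le> k - 1" using P0[of "k-1"] k1 by (auto simp: Pd_def)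
    hence d1: "degree (pCons 0 (P0 (k-1))) \<le> k" using degree_pCons0 k1 by fastforce
    have d2: "degree (\<Sum>t<k. smult (H $$ (t,k-1)) (P0 t)) \<le> k"
    proof (rule degree_sum_le, simp)
      fix t assume "t \<in> {..<k}"
      hence "degree (P0 t) \<le> k" using P0[of t] by (auto simp: Pd_def)
      thus "degree (smult (H $$ (t,k-1)) (P0 t)) \<le> k" using degree_smult_le order.trans by blast
    qed
    have "degree (pCons 0 (P0 (k-1)) - (\<Sum>t<k. smult (H $$ (t,k-1)) (P0 t))) \<le> k"
      using d1 d2 degree_diff_le by blast
    thus ?thesis unfolding pk_def using degree_smult_le order.trans by blast
  qed
  define P where "P l = (if l < k then P0 l else pk)" for l
  have part1: "\<exists>p. \<forall>l\<le>k. p l \<in> Pspace (int l) \<and> poly_mat (p l) Z *\<^sub>v w = (if l < k then col Q l else q)"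
  proof (intro exI allI impI conjI)
    fix l assume l: "l \<le> k"
    show "P l \<in> Pspace (int l)" unfolding Pspace_Pd P_def using P0[of l] dpk l
      by (auto simp: Pd_def)
    show "poly_mat (P l) Z *\<^sub>v w = (if l < k then col Q l else q)"
      unfolding phi P_def using P0[of l] Pspk by auto
  qed
  have orth0: "conjugate q \<bullet> col Q a = 0" if a: "a < k" for a
  proof -
    have "(mat_adjoint (mat_of_cols m [q]) * Q) $$ (0,a) = 0" using qQ a m_def by simp
    moreover have "(mat_adjoint (mat_of_cols m [q]) * Q) $$ (0,a) = conjugate q \<bullet> col Q a"
      using a Qc qc' by (simp add: mat_adjoint_def)
    ultimately show ?thesis by simp
  qed
  define V where "V l = (if l < k then col Q l else q)" for l
  have Vc: "V l \<in> carrier_vec m" for l unfolding V_def using colc qc' by auto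
  have VV: "V a \<bullet>c V b = (if a = b then 1 else 0)" if a: "a \<le> k" and b: "b \<le> k" for a b
  proof (cases "a < k")
    case True note a' = this
    show ?thesis
    proof (cases "b < k")
      case True
      have "V a \<bullet>c V b = (mat_adjoint Q * Q) $$ (b,a)" unfolding V_def using a' True adj_entry[OF Qc True a'] by simp
      thus ?thesis using a' True QQ by auto
    next
      case False
      hence bk: "b = k" using b by simp
      have "V a \<bullet>c V b = col Q a \<bullet> conjugate q" unfolding V_def using a' bk by simp
      also have "\<dots> = conjugate q \<bullet> col Q a" by (rule comm_scalar_prod[of _ m], insert colc qc', auto)
      finally show ?thesis using orth0[OF a'] a' bk by simp
    qed
  next
    case False
    hence ak: "a = k" using a by simp
    show ?thesis
    proof (cases "b < k")
      case True
      have "V a \<bullet>c V b = q \<bullet>c col Q b" unfolding V_def using ak True by simp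
      also have "\<dots> = conjugate (conjugate q \<bullet> col Q b)" by (rule conjugate_conjugate_sprod[symmetric, of _ m], insert colc qc', auto)
      finally show ?thesis using orth0[OF True] ak True by simp
    next
      case False
      hence "b = k" using b by simp
      thus ?thesis using ak qq unfolding V_def by simp
    qed
  qed
  have part2: "sobolev_orthonormal (sob_ip n z kk \<beta> \<alpha>) p k \<and> poly_recurrence p H h k"
    if hp: "\<forall>l\<le>k. p l \<in> Pspace (int l) \<and> poly_mat (p l) Z *\<^sub>v w = (if l < k then col Q l else q)" for p
  proof -
    have pV: "Ps (p l) = V l" if "l \<le> k" for l using hp that unfolding phi V_def by auto
    have pd: "p l \<in> Pd (Suc l)" if "l \<le> k" for l using hp that unfolding Pspace_Pd by auto
    have pdk: "degree (p t) \<le> k" if "t \<le> k" for t using pd[OF that] that by (auto simp: Pd_def)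
    have ip: "sob_ip n z kk \<beta> \<alpha> (p a) (p b) = (if a = b then 1 else 0)" if "a \<le> k" "b \<le> k" for a b
      unfolding sob_ip_psi Ps_def[symmetric] using pV[OF that(1)] pV[OF that(2)] VV[OF that] by simp
    have exact: "p l \<notin> Pd l" if l: "l \<le> k" for l
    proof
      assume pl: "p l \<in> Pd l"
      show False
      proof (cases l)
        case 0
        hence "p l = 0" using pl by (simp add: Pd_def)
        hence "V l = Ps 0" using pV[OF l] by simp
        hence "V l \<bullet>c V l = 0" unfolding Ps_def psi_zero by simp
        thus False using VV[OF l l] by simp
      next
        case (Suc l')
        have "V l \<in> Ps ` Pd l" using pV[OF l] pl by force
        also have "\<dots> = span_list m (map (col Q) [0..<l])" using SP[of l] KR Suc l by simp
        also have "map (col Q) [0..<l] = map V [0..<l]" unfolding V_def using l by auto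
        finally obtain c where c: "c \<in> carrier_vec l" and Vl: "V l = mat_of_cols m (map V [0..<l]) *\<^sub>v c"
          unfolding span_list_def by auto
        have L: "(mat_of_cols m (map V [0..<l]) *\<^sub>v c) \<bullet>c V l = (\<Sum>t<length (map V [0..<l]). c $ t * (map V [0..<l] ! t \<bullet>c V l))"
          by (rule lincomb_ip, insert Vc c, auto)
        have "V l \<bullet>c V l = (\<Sum>t<l. c $ t * (map V [0..<l] ! t \<bullet>c V l))"
          using L unfolding Vl[symmetric] by simp
        also have "\<dots> = 0" by (rule sum.neutral, insert VV l, auto)
        finally show False using VV[OF l l] by simp
      qed
    qed
    have so: "sobolev_orthonormal (sob_ip n z kk \<beta> \<alpha>) p k"
      unfolding sobolev_orthonormal_def Pspace_Pd using pd exact ip by auto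
    have rec: "pCons 0 (p c) = (\<Sum>t<k. smult (H $$ (t,c)) (p t)) + (if c = k - 1 then smult (complex_of_real h) (p k) else 0)"
      if c: "c < k" for c
    proof (rule psi_inj2[OF zi bn an, folded Ps_def])
      show "\<forall>i<sob_m n kk. Ps (pCons 0 (p c)) $ i = Ps ((\<Sum>t<k. smult (H $$ (t,c)) (p t)) + (if c = k - 1 then smult (complex_of_real h) (p k) else 0)) $ i"
      proof (intro allI impI)
        fix i assume "i < sob_m n kk"
        hence i: "i < m" and i': "i < dl kk [1..<n+1]" using mdl m_def by auto
        have "Ps (pCons 0 (p c)) $ i = (Z *\<^sub>v col Q c) $ i" using Zm pV[of c] c unfolding V_def by (metis less_imp_le)
        also have "\<dots> = (\<Sum>t<k. Q $$ (i,t) * H $$ (t,c)) + (if c = k - 1 then complex_of_real h * q $ i else 0)"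
          using ARe i c by simp
        also have "(\<Sum>t<k. Q $$ (i,t) * H $$ (t,c)) = (\<Sum>t<k. H $$ (t,c) * Ps (p t) $ i)"
          by (rule sum.cong, insert Qc i pV, auto simp: V_def)
        also have "q $ i = Ps (p k) $ i" using pV[of k] unfolding V_def by simp
        finally show "Ps (pCons 0 (p c)) $ i = Ps ((\<Sum>t<k. smult (H $$ (t,c)) (p t)) + (if c = k - 1 then smult (complex_of_real h) (p k) else 0)) $ i"
          unfolding Ps_def psi_rhs[OF i'] .
      qed
      have "degree (p c) \<le> c" using pd[of c] c by (auto simp: Pd_def)
      hence "degree (pCons 0 (p c)) \<le> k" using degree_pCons0 c by fastforce
      thus "degree (pCons 0 (p c)) < sob_m n kk" using km by simp
      have "degree ((\<Sum>t<k. smult (H $$ (t,c)) (p t)) + (if c = k - 1 then smult (complex_of_real h) (p k) else 0)) \<le> k"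
        by (rule degree_rhs, insert pdk, auto)
      thus "degree ((\<Sum>t<k. smult (H $$ (t,c)) (p t)) + (if c = k - 1 then smult (complex_of_real h) (p k) else 0)) < sob_m n kk"
        using km by simp
    qed
    have "poly_recurrence p H h k" unfolding poly_recurrence_def
    proof (intro allI impI)
      fix x :: complex and c assume c: "c < k"
      have "x * poly (p c) x = poly (pCons 0 (p c)) x" by simp
      also have "\<dots> = poly ((\<Sum>t<k. smult (H $$ (t,c)) (p t)) + (if c = k - 1 then smult (complex_of_real h) (p k) else 0)) x"
        using rec[OF c] by simp
      finally show "x * poly (p c) x = (\<Sum>i<k. poly (p i) x * H $$ (i, c)) + (if c = k - 1 then complex_of_real h * poly (p k) x else 0)"
        unfolding poly_rhs .
    qed
    with so show ?thesis by simp
  qed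
  show ?thesis using part1 part2 unfolding Z_def w_def by blast
qed




lemma dir2:
  fixes n k :: nat and z \<beta> :: "nat \<Rightarrow> complex" and kk :: "nat \<Rightarrow> nat"
    and \<alpha> :: "nat \<Rightarrow> nat \<Rightarrow> complex"
  assumes zi: "inj_on z {1..n}"
    and bn: "\<forall>j\<in>{1..n}. \<beta> j \<noteq> 0"
    and an: "\<forall>j\<in>{1..n}. \<forall>i\<in>{1..kk j}. \<alpha> j i \<noteq> 0"
    and k1: "1 \<le> k" and km: "k < sob_m n kk"
    and SO: "sobolev_orthonormal (sob_ip n z kk \<beta> \<alpha>) p k"
    and Hc: "H \<in> carrier_mat k k" and h0: "h > 0" and REC: "poly_recurrence p H h k"
  shows "let Q = mat_of_cols (sob_m n kk) (map (\<lambda>l. poly_mat (p l) (sob_Z n z kk \<alpha>) *\<^sub>v sob_w n kk \<beta>) [0..<k]);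
           q = poly_mat (p k) (sob_Z n z kk \<alpha>) *\<^sub>v sob_w n kk \<beta>
       in nested_onb Q (sob_Z n z kk \<alpha>) (sob_w n kk \<beta>) k \<and> arnoldi_rel (sob_Z n z kk \<alpha>) Q H h q k"
proof -
  define m where "m = sob_m n kk"
  define Z where "Z = sob_Z n z kk \<alpha>"
  define w where "w = sob_w n kk \<beta>"
  define Ps where "Ps = psi z kk \<beta> \<alpha> [1..<n+1]"
  have mdl: "dl kk [1..<n+1] = m" unfolding m_def sob_m_dl ..
  have Zc: "Z \<in> carrier_mat m m" unfolding Z_def m_def by (rule Zc)
  have dw: "dim_vec w = m" unfolding w_def m_def by (rule dw)
  have phi: "\<And>p. poly_mat p Z *\<^sub>v w = Ps p" unfolding Z_def w_def Ps_def by (rule phi_eq)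
  have KR: "\<And>i. krylov Z w i = Ps ` Pd i" unfolding Z_def w_def Ps_def by (rule KR_eq)
  have Zm: "\<And>p. Z *\<^sub>v Ps p = Ps (pCons 0 p)" unfolding Z_def Ps_def by (rule Zmul)
  have Psc: "\<And>p. Ps p \<in> carrier_vec m" unfolding Ps_def mdl[symmetric] by simp
  have pd: "p l \<noteq> 0 \<and> degree (p l) = l" if "l \<le> k" for l
    using SO that unfolding sobolev_orthonormal_def Pspace_Pd Pd_def by force
  have ip: "Ps (p a) \<bullet>c Ps (p b) = (if a = b then 1 else 0)" if "a \<le> k" "b \<le> k" for a b
    using SO that unfolding sobolev_orthonormal_def sob_ip_psi Ps_def by auto
  define Q where "Q = mat_of_cols m (map (\<lambda>l. Ps (p l)) [0..<k])"
  define q where "q = Ps (p k)"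
  have Qeq: "mat_of_cols (sob_m n kk) (map (\<lambda>l. poly_mat (p l) (sob_Z n z kk \<alpha>) *\<^sub>v sob_w n kk \<beta>) [0..<k]) = Q"
    unfolding Q_def m_def phi[unfolded Z_def w_def] ..
  have qeq: "poly_mat (p k) (sob_Z n z kk \<alpha>) *\<^sub>v sob_w n kk \<beta> = q"
    unfolding q_def phi[unfolded Z_def w_def] ..
  have Qc: "Q \<in> carrier_mat m k" unfolding Q_def using mat_of_cols_carrier(1)[of m "map (\<lambda>l. Ps (p l)) [0..<k]"] by simp
  have colQ: "col Q t = Ps (p t)" if "t < k" for t
    unfolding Q_def using that Psc by simp
  have Qij: "Q $$ (i,t) = Ps (p t) $ i" if "i < m" "t < k" for i t
  proof -
    have "col Q t $ i = Q $$ (i,t)" using that Qc by simp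
    thus ?thesis using colQ[OF that(2)] by simp
  qed
  have qc: "q \<in> carrier_vec m" unfolding q_def by (rule Psc)
  have QQ: "mat_adjoint Q * Q = 1\<^sub>m k"
  proof (rule eq_matI)
    fix a b assume "a < dim_row (1\<^sub>m k :: complex mat)" "b < dim_col (1\<^sub>m k :: complex mat)"
    hence a: "a < k" and b: "b < k" by auto
    have "(mat_adjoint Q * Q) $$ (a,b) = col Q b \<bullet>c col Q a" by (rule adj_entry[OF Qc a b])
    also have "\<dots> = Ps (p b) \<bullet>c Ps (p a)" using colQ a b by simp
    also have "\<dots> = (if a = b then 1 else 0)" using ip[of b a] a b by auto
    finally show "(mat_adjoint Q * Q) $$ (a,b) = 1\<^sub>m k $$ (a,b)" using a b by simp
  qed (insert Qc, auto simp: mat_adjoint_def)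
  have SP: "span_list (dim_vec w) (map (col Q) [0..<i]) = krylov Z w i" if i: "i \<in> {1..k}" for i
  proof -
    have "map (col Q) [0..<i] = map (\<lambda>t. psi z kk \<beta> \<alpha> [1..<n+1] (p t)) [0..<i]"
      using colQ i unfolding Ps_def by auto
    hence "span_list (dim_vec w) (map (col Q) [0..<i]) = Ps ` pspan p i"
      unfolding dw mdl[symmetric] Ps_def by (simp only: span_psi)
    also have "pspan p i = Pd i" by (rule pspan_exact, insert pd i, auto)
    finally show ?thesis using KR by simp
  qed
  have NO: "nested_onb Q Z w k" unfolding nested_onb_def using Qc QQ SP dw by auto
  have AR: "arnoldi_rel Z Q H h q k"
    unfolding AR_entry[OF Zc Qc Hc qc]
  proof (intro allI impI)
    fix i c assume i: "i < m" and c: "c < k"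
    have i': "i < dl kk [1..<n+1]" using i mdl by simp
    have pe: "pCons 0 (p c) = (\<Sum>t<k. smult (H $$ (t,c)) (p t)) + (if c = k - 1 then smult (complex_of_real h) (p k) else 0)"
    proof -
      have "poly (pCons 0 (p c)) = poly ((\<Sum>t<k. smult (H $$ (t,c)) (p t)) + (if c = k - 1 then smult (complex_of_real h) (p k) else 0))"
      proof
        fix x
        show "poly (pCons 0 (p c)) x = poly ((\<Sum>t<k. smult (H $$ (t,c)) (p t)) + (if c = k - 1 then smult (complex_of_real h) (p k) else 0)) x"
          unfolding poly_rhs using REC c unfolding poly_recurrence_def by simp
      qed
      thus ?thesis by (simp add: poly_eq_poly_eq_iff)
    qed
    have "(Z *\<^sub>v col Q c) $ i = Ps (pCons 0 (p c)) $ i" using colQ[OF c] Zm by simp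
    also have "\<dots> = (\<Sum>t<k. H $$ (t,c) * Ps (p t) $ i) + (if c = k - 1 then complex_of_real h * Ps (p k) $ i else 0)"
      unfolding pe Ps_def by (rule psi_rhs[OF i'])
    also have "(\<Sum>t<k. H $$ (t,c) * Ps (p t) $ i) = (\<Sum>t<k. Q $$ (i,t) * H $$ (t,c))"
      by (rule sum.cong, auto simp: Qij[OF i])
    finally show "(Z *\<^sub>v col Q c) $ i = (\<Sum>t<k. Q $$ (i,t) * H $$ (t,c)) + (if c = k - 1 then complex_of_real h * q $ i else 0)"
      unfolding q_def .
  qed
  show ?thesis unfolding Let_def Qeq qeq using NO AR unfolding Z_def w_def by simp
qed


theorem corollary1:
  fixes n k :: nat and z \<beta> :: "nat \<Rightarrow> complex" and kk :: "nat \<Rightarrow> nat"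
    and \<alpha> :: "nat \<Rightarrow> nat \<Rightarrow> complex"
  assumes "n \<ge> 1"
    and "inj_on z {1..n}"
    and "\<forall>j\<in>{1..n}. \<beta> j \<noteq> 0"
    and "\<forall>j\<in>{1..n}. \<forall>i\<in>{1..kk j}. \<alpha> j i \<noteq> 0"
    and "1 \<le> k" and "k < sob_m n kk"
  shows
   "(\<forall>Q H h q.
      nested_onb Q (sob_Z n z kk \<alpha>) (sob_w n kk \<beta>) k \<and>
      H \<in> carrier_mat k k \<and> hessenberg H \<and> h > 0 \<and>
      q \<in> carrier_vec (sob_m n kk) \<and> q \<bullet>c q = 1 \<and>
      mat_adjoint (mat_of_cols (sob_m n kk) [q]) * Q = 0\<^sub>m 1 k \<and>
      arnoldi_rel (sob_Z n z kk \<alpha>) Q H h q k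
      \<longrightarrow>
      (\<exists>p. \<forall>l\<le>k. p l \<in> Pspace (int l) \<and>
             poly_mat (p l) (sob_Z n z kk \<alpha>) *\<^sub>v sob_w n kk \<beta> = (if l < k then col Q l else q)) \<and>
      (\<forall>p. (\<forall>l\<le>k. p l \<in> Pspace (int l) \<and>
             poly_mat (p l) (sob_Z n z kk \<alpha>) *\<^sub>v sob_w n kk \<beta> = (if l < k then col Q l else q))
         \<longrightarrow> sobolev_orthonormal (sob_ip n z kk \<beta> \<alpha>) p k \<and> poly_recurrence p H h k))
    \<and>
    (\<forall>p H h.
      sobolev_orthonormal (sob_ip n z kk \<beta> \<alpha>) p k \<and>
      H \<in> carrier_mat k k \<and> hessenberg H \<and> h > 0 \<and> poly_recurrence p H h k
      \<longrightarrow>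
      (let Q = mat_of_cols (sob_m n kk) (map (\<lambda>l. poly_mat (p l) (sob_Z n z kk \<alpha>) *\<^sub>v sob_w n kk \<beta>) [0..<k]);
           q = poly_mat (p k) (sob_Z n z kk \<alpha>) *\<^sub>v sob_w n kk \<beta>
       in nested_onb Q (sob_Z n z kk \<alpha>) (sob_w n kk \<beta>) k \<and> arnoldi_rel (sob_Z n z kk \<alpha>) Q H h q k))"
  apply (rule conjI)
   apply (intro allI impI)
   apply (elim conjE)
   apply (rule dir1[OF assms(2-6)]; assumption)
  apply (intro allI impI)
  apply (elim conjE)
  apply (rule dir2[OF assms(2-6)]; assumption)
  done

end
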